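(* Let $m\ge4$, $3\le i\le m$, and let $p=(p_1,\dots,p_m)$ be an ordered tuple of distinct points of $\overline{\mathbf H^n_{\mathbb H}}$ with $p_1,\dots,p_i\in\partial\mathbf H^n_{\mathbb H}$ and $p_{i+1},\dots,p_m\in\mathbf H^n_{\mathbb H}$. Suppose the Gram matrix of the lift $\mathbf p=(\mathbf p_1,\dots,\mathbf p_m)$ is semi-normalized, and let $\lambda_1,\dots,\lambda_m$ be nonzero quaternions. Then the Gram matrix of the lift $\mathbf p'=(\mathbf p_1\lambda_1,\dots,\mathbf p_m\lambda_m)$ is semi-normalized if and only if $\lambda_1=\lambda_2=\cdots=\lambda_m$ and $|\lambda_1|=1$.
   Context: $\mathbb H^{n,1}$ is the right quaternionic vector space $\mathbb H^{n+1}$ with Hermitian form $\langle\mathbf z,\mathbf w\rangle=\bar w_{n+1}z_1+\bar w_2z_2+\cdots+\bar w_nz_n+\bar w_1z_{n+1}$; $\mathbf H^n_{\mathbb H}$ (resp. $\partial\mathbf H^n_{\mathbb H}$) consists of quaternionic lines of negative (resp. nonzero null) vectors, and a lift of a point is a spanning vector. The Gram matrix of a lift is $G=(g_{kj})$, $g_{kj}=\langle\mathbf p_j,\mathbf p_k\rangle$; it is semi-normalized if $g_{kk}=0$ for $k\le i$, $g_{kk}=-1$ for $k>i$, $g_{1j}=1$ for $2\le j\le i$, $|g_{23}|=1$, and $g_{1j}$ is a positive real number for $i<j\le m$. *)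

theory Defs
  imports Complex_Main
begin

datatype quat = Quat (qre: real) (qi: real) (qj: real) (qk: real)

instantiation quat :: "{zero, one, plus, minus, uminus, times}"
begin
definition "0 = Quat 0 0 0 0"
definition "1 = Quat 1 0 0 0"
definition "x + y = Quat (qre x + qre y) (qi x + qi y) (qj x + qj y) (qk x + qk y)"
definition "x - y = Quat (qre x - qre y) (qi x - qi y) (qj x - qj y) (qk x - qk y)"
definition "- x = Quat (- qre x) (- qi x) (- qj x) (- qk x)"
definition "x * y = Quat
   (qre x * qre y - qi x * qi y - qj x * qj y - qk x * qk y)
   (qre x * qi y + qi x * qre y + qj x * qk y - qk x * qj y)
   (qre x * qj y - qi x * qk y + qj x * qre y + qk x * qi y)
   (qre x * qk y + qi x * qj y - qj x * qi y + qk x * qre y)"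
instance ..
end

instance quat :: ab_group_add
  by standard (auto simp: zero_quat_def plus_quat_def minus_quat_def uminus_quat_def
      intro: quat.expand)

definition qcnj :: "quat \<Rightarrow> quat" where
  "qcnj x = Quat (qre x) (- qi x) (- qj x) (- qk x)"

definition qnorm :: "quat \<Rightarrow> real" where
  "qnorm x = sqrt (qre x ^ 2 + qi x ^ 2 + qj x ^ 2 + qk x ^ 2)"

definition qpos_real :: "quat \<Rightarrow> bool" where
  "qpos_real x \<longleftrightarrow> qre x > 0 \<and> qi x = 0 \<and> qj x = 0 \<and> qk x = 0"

text \<open>Vectors of \<open>\<bbbH>\<^sup>n\<^sup>+\<^sup>1\<close> are functions \<open>nat \<Rightarrow> quat\<close>; only the
coordinates \<open>1..n+1\<close> are relevant.\<close>
type_synonym qvec = "nat \<Rightarrow> quat"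

definition rscale :: "qvec \<Rightarrow> quat \<Rightarrow> qvec" where
  "rscale z l = (\<lambda>k. z k * l)"

definition herm :: "nat \<Rightarrow> qvec \<Rightarrow> qvec \<Rightarrow> quat" where
  "herm n z w = qcnj (w (n+1)) * z 1 + (\<Sum>k\<in>{2..n}. qcnj (w k) * z k) + qcnj (w 1) * z (n+1)"

definition qvec_nonzero :: "nat \<Rightarrow> qvec \<Rightarrow> bool" where
  "qvec_nonzero n z \<longleftrightarrow> (\<exists>k\<in>{1..n+1}. z k \<noteq> 0)"

definition same_line :: "nat \<Rightarrow> qvec \<Rightarrow> qvec \<Rightarrow> bool" where
  "same_line n z w \<longleftrightarrow> (\<exists>l. \<forall>k\<in>{1..n+1}. z k = w k * l)"

text \<open>\<open>z\<close> lifts a point of the boundary (nonzero null vector) resp. of the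
  interior (negative vector) of quaternionic hyperbolic space.\<close>
definition lifts_boundary_point :: "nat \<Rightarrow> qvec \<Rightarrow> bool" where
  "lifts_boundary_point n z \<longleftrightarrow> qvec_nonzero n z \<and> herm n z z = 0"

definition lifts_interior_point :: "nat \<Rightarrow> qvec \<Rightarrow> bool" where
  "lifts_interior_point n z \<longleftrightarrow> qre (herm n z z) < 0"

definition gram :: "nat \<Rightarrow> (nat \<Rightarrow> qvec) \<Rightarrow> nat \<Rightarrow> nat \<Rightarrow> quat" where
  "gram n p k j = herm n (p j) (p k)"

definition semi_normalized :: "nat \<Rightarrow> nat \<Rightarrow> nat \<Rightarrow> (nat \<Rightarrow> qvec) \<Rightarrow> bool" where
  "semi_normalized n m i p \<longleftrightarrow>
     (\<forall>k\<in>{1..i}. gram n p k k = 0) \<and>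
     (\<forall>k\<in>{i<..m}. gram n p k k = - 1) \<and>
     (\<forall>j\<in>{2..i}. gram n p 1 j = 1) \<and>
     qnorm (gram n p 2 3) = 1 \<and>
     (\<forall>j\<in>{i<..m}. qpos_real (gram n p 1 j))"

end

theory Submission
  imports Defs
begin

instance quat :: ring_1
  by standard (auto simp: zero_quat_def one_quat_def plus_quat_def times_quat_def
      algebra_simps intro!: quat.expand)

lemma quat_eq_iff: "x = y \<longleftrightarrow> qre x = qre y \<and> qi x = qi y \<and> qj x = qj y \<and> qk x = qk y"
  by (auto intro: quat.expand)

lemma qcnj_mult: "qcnj (a * b) = qcnj b * qcnj a"
  by (simp add: qcnj_def times_quat_def quat_eq_iff algebra_simps)

lemma qcnj_cnj: "qcnj (qcnj a) = a"
  by (simp add: qcnj_def quat_eq_iff)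

lemma cnj_self: "qcnj a * a = Quat ((qnorm a)^2) 0 0 0"
  by (simp add: qcnj_def times_quat_def qnorm_def quat_eq_iff algebra_simps power2_eq_square)

lemma self_cnj: "a * qcnj a = Quat ((qnorm a)^2) 0 0 0"
  by (simp add: qcnj_def times_quat_def qnorm_def quat_eq_iff algebra_simps power2_eq_square)

lemma qnorm_mult: "qnorm (a * b) = qnorm a * qnorm b"
  unfolding qnorm_def real_sqrt_mult[symmetric]
  by (rule arg_cong[where f=sqrt]) (simp add: times_quat_def algebra_simps power2_eq_square)

lemma qnorm_nonneg: "qnorm a \<ge> 0"
  by (simp add: qnorm_def)

lemma qnorm_one: "qnorm 1 = 1"
  by (simp add: qnorm_def one_quat_def)

lemma qnorm_neg: "qnorm (- a) = qnorm a"
  by (simp add: qnorm_def uminus_quat_def)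

lemma qnorm_cnj: "qnorm (qcnj a) = qnorm a"
  by (simp add: qnorm_def qcnj_def)

lemma sc_mult: "Quat r 0 0 0 * a = Quat (r * qre a) (r * qi a) (r * qj a) (r * qk a)"
  by (simp add: times_quat_def)

lemma mult_sc: "a * Quat r 0 0 0 = Quat (r * qre a) (r * qi a) (r * qj a) (r * qk a)"
  by (simp add: times_quat_def algebra_simps)

lemma one_sc: "(1::quat) = Quat 1 0 0 0" by (simp add: one_quat_def)
lemma mone_sc: "(-1::quat) = Quat (-1) 0 0 0" by (simp add: one_quat_def uminus_quat_def)

lemma herm_scale:
  "herm n (rscale z a) (rscale w b) = qcnj b * herm n z w * a"
proof -
  have e: "qcnj (w k * b) * (z l * a) = qcnj b * (qcnj (w k) * z l) * a" for k l
    by (simp add: qcnj_mult mult.assoc)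
  have "herm n (rscale z a) (rscale w b) =
     qcnj b * (qcnj (w (n+1)) * z 1) * a + (\<Sum>k\<in>{2..n}. qcnj b * (qcnj (w k) * z k) * a)
      + qcnj b * (qcnj (w 1) * z (n+1)) * a"
    unfolding herm_def rscale_def by (simp only: e)
  also have "\<dots> = qcnj b * herm n z w * a"
    unfolding herm_def by (simp add: sum_distrib_left sum_distrib_right distrib_left distrib_right)
  finally show ?thesis .
qed

lemma gram_scale:
  "gram n (\<lambda>j. rscale (p j) (lam j)) k j = qcnj (lam k) * gram n p k j * lam j"
  by (simp add: gram_def herm_scale)

lemma unit_eq:
  assumes "qnorm a = 1" "qcnj a * b = 1" shows "b = a"
proof -
  have "a * (qcnj a * b) = (a * qcnj a) * b" by (simp add: mult.assoc)
  also have "a * qcnj a = 1" using assms(1) by (simp add: self_cnj one_sc)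
  finally show ?thesis using assms(2) by simp
qed

lemma sq1: "(x::real) \<ge> 0 \<Longrightarrow> x^2 = 1 \<Longrightarrow> x = 1"
  using power2_eq_1_iff[of x] by auto

lemma sq1m: "(x::real) * x = 1 \<Longrightarrow> 0 < x \<Longrightarrow> x = 1"
  using sq1[of x] by (simp add: power2_eq_square)

theorem lemma8p5:
  fixes n m i :: nat and p :: "nat \<Rightarrow> qvec" and lam :: "nat \<Rightarrow> quat"
  assumes "n \<ge> 1" and "m \<ge> 4" and "3 \<le> i" and "i \<le> m"
    and "\<forall>j\<in>{1..i}. lifts_boundary_point n (p j)"
    and "\<forall>j\<in>{i<..m}. lifts_interior_point n (p j)"
    and "\<forall>j\<in>{1..m}. \<forall>k\<in>{1..m}. j \<noteq> k \<longrightarrow> \<not> same_line n (p j) (p k)"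
    and "semi_normalized n m i p"
    and "\<forall>j\<in>{1..m}. lam j \<noteq> 0"
  shows "semi_normalized n m i (\<lambda>j. rscale (p j) (lam j)) \<longleftrightarrow>
           (\<forall>j\<in>{1..m}. lam j = lam 1) \<and> qnorm (lam 1) = 1"
proof -
  note sn = assms(8)[unfolded semi_normalized_def]
  have s1: "\<forall>k\<in>{1..i}. gram n p k k = 0" using sn by blast
  have s2: "\<forall>k\<in>{i<..m}. gram n p k k = - 1" using sn by blast
  have s3: "\<forall>j\<in>{2..i}. gram n p 1 j = 1" using sn by blast
  have s4: "qnorm (gram n p 2 3) = 1" using sn by blast
  have s5: "\<forall>j\<in>{i<..m}. qpos_real (gram n p 1 j)" using sn by blast
  show ?thesis
  proof
    assume "semi_normalized n m i (\<lambda>j. rscale (p j) (lam j))"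
    note sn' = this[unfolded semi_normalized_def gram_scale]
    have t2: "\<forall>k\<in>{i<..m}. qcnj (lam k) * gram n p k k * lam k = - 1" using sn' by blast
    have t3: "\<forall>j\<in>{2..i}. qcnj (lam 1) * gram n p 1 j * lam j = 1" using sn' by blast
    have t4: "qnorm (qcnj (lam 2) * gram n p 2 3 * lam 3) = 1" using sn' by blast
    have t5: "\<forall>j\<in>{i<..m}. qpos_real (qcnj (lam 1) * gram n p 1 j * lam j)" using sn' by blast
    have A: "qcnj (lam 1) * lam j = 1" if "j \<in> {2..i}" for j
      using bspec[OF t3 that] bspec[OF s3 that] by simp
    have A2: "qnorm (lam 1) * qnorm (lam j) = 1" if "j \<in> {2..i}" for j
      using arg_cong[OF A[OF that], of qnorm] by (simp add: qnorm_mult qnorm_cnj qnorm_one)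
    have "qnorm (lam 2) * qnorm (lam 3) = 1"
      using t4 s4 by (simp add: qnorm_mult qnorm_cnj)
    moreover have "qnorm (lam 1) * qnorm (lam 2) = 1" "qnorm (lam 1) * qnorm (lam 3) = 1"
      using A2 assms(3) by auto
    ultimately have "(qnorm (lam 1))^2 = 1"
      by (metis (no_types, lifting) mult.commute mult.left_commute mult_1_right power2_eq_square)
    hence n1: "qnorm (lam 1) = 1" using sq1 qnorm_nonneg by blast
    have eqi: "lam j = lam 1" if "j \<in> {2..i}" for j
      using unit_eq[OF n1 A[OF that]] .
    have eqm: "lam j = lam 1" if j: "j \<in> {i<..m}" for j
    proof -
      have "qcnj (lam j) * (-1) * lam j = -1" using bspec[OF t2 j] bspec[OF s2 j] by simp
      hence cj: "qcnj (lam j) * lam j = 1" by simp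
      have nj: "qnorm (lam j) = 1"
        using arg_cong[OF cj, of qnorm] sq1[OF qnorm_nonneg[of "lam j"]]
        by (simp add: qnorm_mult qnorm_cnj qnorm_one power2_eq_square)
      obtain r where r: "gram n p 1 j = Quat r 0 0 0" "r > 0"
        using bspec[OF s5 j] unfolding qpos_real_def by (metis quat.collapse)
      have pr: "qpos_real (qcnj (lam 1) * Quat r 0 0 0 * lam j)" using bspec[OF t5 j] r by simp
      define u where "u = qcnj (lam 1) * lam j"
      have "qcnj (lam 1) * Quat r 0 0 0 * lam j = Quat r 0 0 0 * u"
        unfolding u_def by (simp add: sc_mult mult_sc times_quat_def algebra_simps)
      hence pu: "qpos_real u" using pr r(2) by (simp add: sc_mult qpos_real_def zero_less_mult_iff)
      have "qnorm u = 1" unfolding u_def qnorm_mult qnorm_cnj n1 nj by simp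
      hence "u = 1" using pu unfolding qpos_real_def qnorm_def
        by (cases u) (auto simp: one_sc power2_eq_square intro: sq1m)
      thus ?thesis using unit_eq[OF n1] u_def by simp
    qed
    have "\<forall>j\<in>{1..m}. lam j = lam 1"
    proof
      fix j assume "j \<in> {1..m}"
      then consider "j = 1" | "j \<in> {2..i}" | "j \<in> {i<..m}" by fastforce
      thus "lam j = lam 1" using eqi eqm by cases auto
    qed
    thus "(\<forall>j\<in>{1..m}. lam j = lam 1) \<and> qnorm (lam 1) = 1" using n1 by blast
  next
    assume H: "(\<forall>j\<in>{1..m}. lam j = lam 1) \<and> qnorm (lam 1) = 1"
    define l where "l = lam 1"
    have H1: "\<forall>j\<in>{1..m}. lam j = l" and H2: "qnorm l = 1" using H unfolding l_def by blast+
    have cl: "qcnj l * l = 1" using H2 by (simp add: cnj_self one_sc)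
    have sc: "qcnj l * Quat r 0 0 0 * l = Quat r 0 0 0" for r
    proof -
      have "qcnj l * Quat r 0 0 0 * l = Quat r 0 0 0 * (qcnj l * l)"
        by (simp add: sc_mult mult_sc times_quat_def algebra_simps)
      thus ?thesis using cl by simp
    qed
    have g: "gram n (\<lambda>j. rscale (p j) (lam j)) k j = qcnj l * gram n p k j * l"
      if "k \<in> {1..m}" "j \<in> {1..m}" for k j
      using bspec[OF H1 that(1)] bspec[OF H1 that(2)] by (simp add: gram_scale)
    have q: "qpos_real x \<Longrightarrow> x = Quat (qre x) 0 0 0" for x
      by (simp add: qpos_real_def quat_eq_iff)
    show "semi_normalized n m i (\<lambda>j. rscale (p j) (lam j))"
      unfolding semi_normalized_def
    proof (intro conjI ballI)
      fix k assume k: "k \<in> {1..i}"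
      hence "k \<in> {1..m}" using assms(4) by auto
      thus "gram n (\<lambda>j. rscale (p j) (lam j)) k k = 0" using g bspec[OF s1 k] by simp
    next
      fix k assume k: "k \<in> {i<..m}"
      hence "k \<in> {1..m}" using assms(3) by auto
      thus "gram n (\<lambda>j. rscale (p j) (lam j)) k k = - 1" using g bspec[OF s2 k] sc[of "-1"]
        by (simp add: mone_sc)
    next
      fix k assume k: "k \<in> {2..i}"
      hence "k \<in> {1..m}" "1 \<in> {1..m}" using assms(4) by auto
      thus "gram n (\<lambda>j. rscale (p j) (lam j)) 1 k = 1" using g bspec[OF s3 k] sc[of 1]
        by (simp add: one_sc)
    next
      have "2 \<in> {1..m}" "3 \<in> {1..m}" using assms(2) by auto
      thus "qnorm (gram n (\<lambda>j. rscale (p j) (lam j)) 2 3) = 1"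
        using g s4 H2 by (simp add: qnorm_mult qnorm_cnj)
    next
      fix k assume k: "k \<in> {i<..m}"
      hence km: "k \<in> {1..m}" "1 \<in> {1..m}" using assms(3) by auto
      have "qpos_real (gram n p 1 k)" using bspec[OF s5 k] .
      moreover have "gram n (\<lambda>j. rscale (p j) (lam j)) 1 k = gram n p 1 k"
        using g[OF km(2) km(1)] q[OF calculation] sc by metis
      ultimately show "qpos_real (gram n (\<lambda>j. rscale (p j) (lam j)) 1 k)" by simp
    qed
  qed
qed

end
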